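(* Suppose $X$ has well-defined scattered $\Pi_1$-products, $\kappa$ is a countable limit ordinal, and $\{A_\lambda\}_{\lambda<\kappa}$ is a transfinite sequence of homotopy cut-sets for paths $\alpha,\beta:[0,1]\to X$ such that (1) $A_{\lambda+1}\subseteq A_\lambda$ for all $\lambda<\kappa$; (2) $A_\lambda=\bigcap_{\mu<\lambda}A_\mu$ for every limit ordinal $\lambda<\kappa$; (3) whenever $(c,d)\in\mathcal{I}(A_{\lambda+1})$ contains $(a,b)\in\mathcal{I}(A_\lambda)$, we have $\alpha|_{[c,a]}\simeq\beta|_{[c,a]}$ if $c<a$ and $\alpha|_{[b,d]}\simeq\beta|_{[b,d]}$ if $b<d$. Then $A_\kappa=\bigcap_{\lambda<\kappa}A_\lambda$ is a homotopy cut-set for $\alpha$ and $\beta$.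
   Context: $\simeq$ is path-homotopy. For a compact set $A\subseteq\mathbb{R}$, $\mathcal{I}(A)$ is the set of connected components of $[\min A,\max A]\setminus A$. For paths $\alpha,\beta:[s,t]\to X$, a set $A\subseteq[s,t]$ is a homotopy cut-set for $\alpha,\beta$ if $A$ is closed, nowhere dense, contains $\{s,t\}$, $\alpha|_A=\beta|_A$, and $\alpha|_{[a,b]}\simeq\beta|_{[a,b]}$ for every $(a,b)\in\mathcal{I}(A)$. $X$ has well-defined scattered $\Pi_1$-products if any two paths $[0,1]\to X$ admitting a scattered homotopy cut-set are path-homotopic. *)

theory Defs
  imports "HOL-Analysis.Analysis"
begin

definition scattered_set :: "real set \<Rightarrow> bool" where
  "scattered_set A \<longleftrightarrow>
     (\<forall>B\<subseteq>A. B \<noteq> {} \<longrightarrow> (\<exists>x\<in>B. \<exists>e>0. ball x e \<inter> B = {x}))"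

definition gap_intervals :: "real set \<Rightarrow> (real \<times> real) set" where
  "gap_intervals A = (\<lambda>C. (Inf C, Sup C)) ` components ({Inf A..Sup A} - A)"

text \<open>Restriction of a path to [a,b], reparametrised affinely over [0,1]
  (same as the library's subpath, which requires a normed vector space).\<close>
definition restr_path :: "real \<Rightarrow> real \<Rightarrow> (real \<Rightarrow> 'a) \<Rightarrow> real \<Rightarrow> 'a" where
  "restr_path a b g = (\<lambda>x. g ((b - a) * x + a))"

definition homotopy_cut_set :: "'a::topological_space set \<Rightarrow> (real \<Rightarrow> 'a) \<Rightarrow> (real \<Rightarrow> 'a) \<Rightarrow> real set \<Rightarrow> bool" where
  "homotopy_cut_set S \<alpha> \<beta> A \<longleftrightarrow>
     closed A \<and> A \<subseteq> {0..1} \<and> interior (closure A) = {} \<and> 0 \<in> A \<and> 1 \<in> A \<and>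
     (\<forall>x\<in>A. \<alpha> x = \<beta> x) \<and>
     (\<forall>(a,b)\<in>gap_intervals A. homotopic_paths S (restr_path a b \<alpha>) (restr_path a b \<beta>))"

definition well_defined_scattered_products :: "'a::topological_space set \<Rightarrow> bool" where
  "well_defined_scattered_products S \<longleftrightarrow>
     (\<forall>\<alpha> \<beta>. path \<alpha> \<and> path_image \<alpha> \<subseteq> S \<and> path \<beta> \<and> path_image \<beta> \<subseteq> S \<and>
        (\<exists>A. scattered_set A \<and> homotopy_cut_set S \<alpha> \<beta> A) \<longrightarrow> homotopic_paths S \<alpha> \<beta>)"

end

theory Submission
  imports Defs
begin



lemma gap_L1:
  fixes C :: "real set"
  assumes cl: "closed C" and sub: "C \<subseteq> {lo..hi}" and lo: "lo \<in> C" and hi: "hi \<in> C"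
    and g: "(p,q) \<in> gap_intervals C"
  shows "p < q \<and> p \<in> C \<and> q \<in> C \<and> {p<..<q} \<inter> C = {}"
proof -
  have I: "Inf C = lo" "Sup C = hi" using sub lo hi
    by (auto intro!: cInf_eq_minimum cSup_eq_maximum)
  obtain X where X: "X \<in> components ({lo..hi} - C)" "p = Inf X" "q = Sup X"
    using g I unfolding gap_intervals_def by auto
  have Xn: "X \<noteq> {}" "X \<subseteq> {lo..hi} - C" "connected X"
    and max: "\<And>D. D \<noteq> {} \<Longrightarrow> X \<subseteq> D \<Longrightarrow> D \<subseteq> {lo..hi} - C \<Longrightarrow> connected D \<Longrightarrow> D = X"
    using X(1) unfolding in_components_maximal by auto
  have iv: "is_interval X" using Xn is_interval_connected_1 by blast
  have bdd: "bdd_below X" "bdd_above X" using Xn(2)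
    by (auto intro!: bdd_belowI[where m=lo] bdd_aboveI[where M=hi])
  have XS: "X \<subseteq> {p..q}" using cInf_lower cSup_upper bdd X by auto
  have op: "{p<..<q} \<subseteq> X"
  proof
    fix y assume y: "y \<in> {p<..<q}"
    then obtain x1 where "x1 \<in> X" "x1 < y" using cInf_less_iff[OF Xn(1) bdd(1)] X by auto
    moreover obtain x2 where "x2 \<in> X" "y < x2" using less_cSup_iff[OF Xn(1) bdd(2)] X y by auto
    ultimately show "y \<in> X" using iv unfolding is_interval_1 by (meson less_le)
  qed
  obtain x0 where x0: "x0 \<in> X" using Xn by auto
  have pC: "p \<in> C"
  proof (rule ccontr)
    assume pn: "p \<notin> C"
    have "lo \<le> p" using Xn X bdd by (auto intro!: cInf_greatest)
    moreover have "p \<le> x0" "x0 \<le> hi" using XS x0 Xn(2) by auto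
    moreover have "p \<le> hi" using calculation by linarith
    ultimately have lop: "lo < p" using lo pn by (metis order_le_less)
    obtain e where e: "e > 0" "ball p e \<subseteq> - C" using cl pn
      by (metis ComplI open_Compl open_contains_ball)
    define e' where "e' = min (e/2) (p - lo)"
    have e'0: "e' > 0" using e lop by (simp add: e'_def)
    define D where "D = {p-e'..p} \<union> X"
    have "D = X"
    proof (rule max)
      show "D \<noteq> {}" "X \<subseteq> D" using Xn by (auto simp: D_def)
      have "{p-e'..p} \<subseteq> ball p e" using e e'0 by (auto simp: e'_def dist_real_def)
      moreover have "{p-e'..p} \<subseteq> {lo..hi}" using \<open>p \<le> hi\<close> by (auto simp: e'_def)
      ultimately show "D \<subseteq> {lo..hi} - C" using e Xn by (auto simp: D_def)
      have "is_interval D" unfolding is_interval_1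
      proof (intro ballI allI impI)
        fix u v x assume uv: "u \<in> D" "v \<in> D" "u \<le> x \<and> x \<le> v"
        show "x \<in> D"
        proof (cases "x \<le> p")
          case True
          have "u \<ge> p - e'" using uv XS e'0 by (auto simp: D_def)
          then show ?thesis using True uv by (auto simp: D_def)
        next
          case False
          then have vX: "v \<in> X" using uv by (auto simp: D_def)
          then have "v \<le> q" using XS by auto
          show ?thesis
          proof (cases "x < q")
            case True then show ?thesis using op False by (auto simp: D_def)
          next
            case False2: False
            then have "x = v" using \<open>v \<le> q\<close> uv by auto
            then show ?thesis using vX by (auto simp: D_def)
          qed
        qed
      qed
      then show "connected D" using is_interval_connected_1 by blast
    qed
    moreover have "p - e' \<in> D" using e'0 by (simp add: D_def)
    ultimately have "p - e' \<in> X" by simp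
    then show False using XS e'0 by auto
  qed
  have qC: "q \<in> C"
  proof (rule ccontr)
    assume qn: "q \<notin> C"
    have "q \<le> hi" using Xn X bdd by (auto intro!: cSup_least)
    moreover have "x0 \<le> q" "lo \<le> x0" using XS x0 Xn(2) by auto
    moreover have "lo \<le> q" using calculation by linarith
    ultimately have qhi: "q < hi" using hi qn by (metis order_le_less)
    obtain e where e: "e > 0" "ball q e \<subseteq> - C" using cl qn
      by (metis ComplI open_Compl open_contains_ball)
    define e' where "e' = min (e/2) (hi - q)"
    have e'0: "e' > 0" using e qhi by (simp add: e'_def)
    define D where "D = {q..q+e'} \<union> X"
    have "D = X"
    proof (rule max)
      show "D \<noteq> {}" "X \<subseteq> D" using Xn by (auto simp: D_def)
      have "{q..q+e'} \<subseteq> ball q e" using e e'0 by (auto simp: e'_def dist_real_def)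
      moreover have "{q..q+e'} \<subseteq> {lo..hi}" using \<open>lo \<le> q\<close> by (auto simp: e'_def)
      ultimately show "D \<subseteq> {lo..hi} - C" using e Xn by (auto simp: D_def)
      have "is_interval D" unfolding is_interval_1
      proof (intro ballI allI impI)
        fix u v x assume uv: "u \<in> D" "v \<in> D" "u \<le> x \<and> x \<le> v"
        show "x \<in> D"
        proof (cases "x \<ge> q")
          case True
          have "v \<le> q + e'" using uv XS e'0 by (auto simp: D_def)
          then show ?thesis using True uv by (auto simp: D_def)
        next
          case False
          then have uX: "u \<in> X" using uv by (auto simp: D_def)
          then have "p \<le> u" using XS by auto
          show ?thesis
          proof (cases "x > p")
            case True then show ?thesis using op False by (auto simp: D_def)
          next
            case False2: False
            then have "x = u" using \<open>p \<le> u\<close> uv by auto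
            then show ?thesis using uX by (auto simp: D_def)
          qed
        qed
      qed
      then show "connected D" using is_interval_connected_1 by blast
    qed
    moreover have "q + e' \<in> D" using e'0 by (simp add: D_def)
    ultimately have "q + e' \<in> X" by simp
    then show False using XS e'0 by auto
  qed
  have "X \<subseteq> {p<..<q}"
  proof
    fix x assume x: "x \<in> X"
    then have "p \<le> x" "x \<le> q" "x \<notin> C" using XS Xn(2) by auto
    then show "x \<in> {p<..<q}" using pC qC by (auto simp: order_le_less)
  qed
  then have Xe: "X = {p<..<q}" using op by blast
  have "{p<..<q} \<noteq> {}" using Xe Xn(1) by simp
  then have "p < q" by simp
  moreover have "{p<..<q} \<inter> C = {}" using Xe Xn(2) by blast
  ultimately show ?thesis using pC qC by blast
qed

lemma gap_L2:
  fixes C :: "real set"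
  assumes sub: "C \<subseteq> {lo..hi}" and lo: "lo \<in> C" and hi: "hi \<in> C"
    and pq: "p < q" "p \<in> C" "q \<in> C" "{p<..<q} \<inter> C = {}"
  shows "(p,q) \<in> gap_intervals C"
proof -
  have I: "Inf C = lo" "Sup C = hi" using sub lo hi
    by (auto intro!: cInf_eq_minimum cSup_eq_maximum)
  have "{p<..<q} \<in> components ({lo..hi} - C)"
    unfolding in_components_maximal
  proof (intro conjI allI impI)
    show "{p<..<q} \<noteq> {}" using pq by auto
    have "lo \<le> p" "q \<le> hi" using pq sub by auto
    then show "{p<..<q} \<subseteq> {lo..hi} - C" using pq by auto
    show "connected {p<..<q}" by simp
    fix D assume D: "D \<noteq> {} \<and> {p<..<q} \<subseteq> D \<and> D \<subseteq> {lo..hi} - C \<and> connected D"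
    then have iv: "is_interval D" using is_interval_connected_1 by blast
    have D1: "{p<..<q} \<subseteq> D" and D2: "D \<subseteq> {lo..hi} - C" using D by blast+
    obtain m where m: "p < m" "m < q" using pq dense by blast
    have "m \<in> D" using D1 m by auto
    have "D \<subseteq> {p<..<q}"
      proof
        fix y assume y: "y \<in> D"
        have "\<not> y \<le> p"
        proof
          assume "y \<le> p"
          then have "p \<in> D" using iv[unfolded is_interval_1] y \<open>m \<in> D\<close> m(1) by (meson less_imp_le)
          then show False using D2 pq by auto
        qed
        moreover have "\<not> y \<ge> q"
        proof
          assume "y \<ge> q"
          then have "q \<in> D" using iv[unfolded is_interval_1] y \<open>m \<in> D\<close> m(2) by (meson less_imp_le)
          then show False using D2 pq by auto
        qed
        ultimately show "y \<in> {p<..<q}" by auto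
      qed
    then show "D = {p<..<q}" using D1 by blast
  qed
  then show ?thesis unfolding gap_intervals_def I using pq
    by (auto intro!: image_eqI[where x="{p<..<q}"])
qed



lemma countable_closed_isolated:
  fixes S :: "real set"
  assumes cl: "closed S" and co: "countable S" and ne: "S \<noteq> {}"
  shows "\<exists>x\<in>S. \<exists>e>0. ball x e \<inter> S = {x}"
proof (rule ccontr)
  assume H: "\<not> (\<exists>x\<in>S. \<exists>e>0. ball x e \<inter> S = {x})"
  define G where "G = (\<lambda>x. S - {x}) ` S"
  have cG: "countable G" using co by (simp add: G_def)
  have "S \<subseteq> closure (\<Inter>G)"
  proof (rule Baire[OF cl cG])
    fix T assume "T \<in> G"
    then obtain x where x: "x \<in> S" "T = S - {x}" by (auto simp: G_def)
    have "openin (top_of_set S) (S \<inter> (- {x}))"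
      by (rule openin_open_Int) auto
    moreover have "S \<inter> (- {x}) = T" using x by auto
    ultimately have o: "openin (top_of_set S) T" by simp
    have "x islimpt S"
      unfolding islimpt_approachable
    proof (intro allI impI)
      fix e :: real assume e: "e > 0"
      have ne1: "ball x e \<inter> S \<noteq> {x}" using H x e by blast
      have xin: "x \<in> ball x e \<inter> S" using x e by simp
      have "\<not> (ball x e \<inter> S \<subseteq> {x})"
      proof
        assume "ball x e \<inter> S \<subseteq> {x}"
        then have "ball x e \<inter> S = {x}" using xin by (intro subset_antisym) simp_all
        then show False using ne1 by contradiction
      qed
      then obtain y where y: "y \<in> ball x e \<inter> S" "y \<notin> {x}" by (meson subsetI)
      have "y \<in> S" "y \<noteq> x" "dist y x < e" using y by (simp_all add: dist_commute)
      then show "\<exists>x'\<in>S. x' \<noteq> x \<and> dist x' x < e" by blast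
    qed
    then have "x islimpt (S - {x})" by (rule islimpt_punctured[THEN iffD1])
    then have "x \<in> closure (S - {x})" unfolding closure_def by simp
    then have "x \<in> closure T" using x(2) by simp
    moreover have "S - {x} \<subseteq> closure T" by (simp add: x(2) closure_subset)
    ultimately have "S \<subseteq> closure T" by blast
    with o show "openin (top_of_set S) T \<and> S \<subseteq> closure T" by blast
  qed
  moreover have "\<Inter>G = {}"
  proof -
    have "y \<notin> \<Inter>G" for y
    proof
      assume y: "y \<in> \<Inter>G"
      obtain z where "z \<in> S" using ne by blast
      then have "S - {z} \<in> G" by (simp add: G_def)
      then have "y \<in> S - {z}" by (rule InterD[OF y])
      then have "y \<in> S" by simp
      then have "S - {y} \<in> G" by (simp add: G_def)
      then have "y \<in> S - {y}" by (rule InterD[OF y])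
      then show False by simp
    qed
    then show ?thesis by blast
  qed
  ultimately show False using ne by simp
qed

lemma scattered_countable_closed:
  fixes C :: "real set"
  assumes cl: "closed C" and co: "countable C"
  shows "scattered_set C"
  unfolding scattered_set_def
proof (intro allI impI)
  fix B assume B: "B \<subseteq> C" "B \<noteq> {}"
  define S where "S = closure B"
  have "S \<subseteq> C" using B cl by (simp add: S_def closure_minimal)
  then have "countable S" using co countable_subset by blast
  moreover have "closed S" "S \<noteq> {}" using B by (auto simp: S_def)
  ultimately obtain x e where x: "x \<in> S" "e > 0" "ball x e \<inter> S = {x}"
    using countable_closed_isolated by blast
  then obtain y where y: "y \<in> B" "dist y x < e"
    unfolding S_def closure_approachable by blast
  have "y \<in> ball x e \<inter> S" using y closure_subset by (auto simp: S_def dist_commute)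
  then have "y = x" using x by blast
  then have xB: "x \<in> B" using y by simp
  have "ball x e \<inter> B \<subseteq> {x}" using x closure_subset by (auto simp: S_def)
  then have "ball x e \<inter> B = {x}" using xB x(2) by auto
  then show "\<exists>x\<in>B. \<exists>e>0. ball x e \<inter> B = {x}" using xB x(2) by blast
qed

lemma countable_interior_closure_empty:
  fixes C :: "real set"
  assumes cl: "closed C" and co: "countable C"
  shows "interior (closure C) = {}"
proof -
  have "interior C = {}"
  proof (rule ccontr)
    assume "interior C \<noteq> {}"
    then obtain x where "x \<in> interior C" "x \<notin> C"
      using open_minus_countable[OF co] by blast
    then show False using interior_subset by blast
  qed
  then show ?thesis using cl by (simp add: closure_closed)
qed




lemma restr_path_cont:
  fixes \<alpha> :: "real \<Rightarrow> 'a::topological_space"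
  assumes p: "path \<alpha>" and im: "path_image \<alpha> \<subseteq> S" and ab: "0 \<le> a" "a \<le> b" "b \<le> 1"
  shows "path (restr_path a b \<alpha>) \<and> path_image (restr_path a b \<alpha>) \<subseteq> S"
proof -
  let ?f = "\<lambda>x::real. (b - a) * x + a"
  have fim: "?f ` {0..1} \<subseteq> {0..1}"
  proof
    fix y assume "y \<in> ?f ` {0..1}"
    then obtain x where x: "0 \<le> x" "x \<le> 1" "y = (b - a) * x + a" by auto
    have "0 \<le> (b - a) * x" using x ab by simp
    moreover have "(b - a) * x \<le> (b - a) * 1" using x ab by (intro mult_left_mono) auto
    ultimately show "y \<in> {0..1}" using x ab by auto
  qed
  have c1: "continuous_on {0..1} ?f" by (intro continuous_intros)
  have c2: "continuous_on (?f ` {0..1}) \<alpha>"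
    using p fim unfolding path_def by (rule continuous_on_subset)
  have "continuous_on {0..1} (\<alpha> \<circ> ?f)" by (rule continuous_on_compose[OF c1 c2])
  moreover have "\<alpha> \<circ> ?f = restr_path a b \<alpha>" by (simp add: restr_path_def o_def)
  ultimately have "path (restr_path a b \<alpha>)" by (simp add: path_def)
  moreover have "path_image (restr_path a b \<alpha>) \<subseteq> S"
  proof -
    have "path_image (restr_path a b \<alpha>) = \<alpha> ` (?f ` {0..1})"
      by (auto simp: path_image_def restr_path_def)
    also have "\<dots> \<subseteq> \<alpha> ` {0..1}" using fim by blast
    also have "\<dots> \<subseteq> S" using im by (simp add: path_image_def)
    finally show ?thesis .
  qed
  ultimately show ?thesis by blast
qed

lemma transport:
  fixes \<alpha> \<beta> :: "real \<Rightarrow> 'a::topological_space"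
  assumes wd: "well_defined_scattered_products S"
    and pa: "path \<alpha>" "path_image \<alpha> \<subseteq> S" "path \<beta>" "path_image \<beta> \<subseteq> S"
    and ab: "0 \<le> a" "a < b" "b \<le> 1"
    and C: "closed C" "countable C" "C \<subseteq> {a..b}" "a \<in> C" "b \<in> C" "\<forall>x\<in>C. \<alpha> x = \<beta> x"
    and gapC: "\<And>p q. p < q \<Longrightarrow> p \<in> C \<Longrightarrow> q \<in> C \<Longrightarrow> {p<..<q} \<inter> C = {} \<Longrightarrow>
                 homotopic_paths S (restr_path p q \<alpha>) (restr_path p q \<beta>)"
  shows "homotopic_paths S (restr_path a b \<alpha>) (restr_path a b \<beta>)"
proof -
  let ?f = "\<lambda>y::real. (b - a) * y + a"
  define A' where "A' = {y. ?f y \<in> C}"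
  have ba: "b - a > 0" using ab by simp
  have finv: "?f ((x - a) / (b - a)) = x" for x using ba by (simp add: field_simps)
  have fmono: "?f y < ?f z \<longleftrightarrow> y < z" for y z using ba by simp
  have A'_closed: "closed A'"
  proof -
    have "A' = ?f -` C" by (auto simp: A'_def)
    moreover have "closed (?f -` C)"
      by (rule continuous_closed_vimage[OF C(1)]) (intro continuous_intros)
    ultimately show ?thesis by simp
  qed
  have A'_count: "countable A'"
  proof -
    have "A' \<subseteq> (\<lambda>x. (x - a) / (b - a)) ` C"
    proof
      fix y assume "y \<in> A'"
      then have "?f y \<in> C" by (simp add: A'_def)
      moreover have "y = (?f y - a) / (b - a)" using ba by (simp add: field_simps)
      ultimately show "y \<in> (\<lambda>x. (x - a) / (b - a)) ` C" by (rule rev_image_eqI)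
    qed
    then show ?thesis using C(2) countable_subset by blast
  qed
  have A'_sub: "A' \<subseteq> {0..1}"
  proof
    fix y assume "y \<in> A'"
    then have "?f y \<in> {a..b}" using C(3) by (auto simp: A'_def)
    then have "0 \<le> (b - a) * y" "(b - a) * y \<le> (b - a) * 1" by auto
    then show "y \<in> {0..1}" using ba by (simp add: zero_le_mult_iff)
  qed
  have A'0: "0 \<in> A'" "1 \<in> A'" using C by (auto simp: A'_def)
  let ?a = "restr_path a b \<alpha>" and ?b = "restr_path a b \<beta>"
  have P1: "path ?a \<and> path_image ?a \<subseteq> S" using restr_path_cont[OF pa(1,2)] ab by simp
  have P2: "path ?b \<and> path_image ?b \<subseteq> S" using restr_path_cont[OF pa(3,4)] ab by simp
  have cut: "homotopy_cut_set S ?a ?b A'"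
    unfolding homotopy_cut_set_def
  proof (intro conjI ballI)
    show "closed A'" "A' \<subseteq> {0..1}" "0 \<in> A'" "1 \<in> A'" by (fact A'_closed A'_sub A'0)+
    show "interior (closure A') = {}"
      by (rule countable_interior_closure_empty[OF A'_closed A'_count])
    fix y assume "y \<in> A'"
    then show "?a y = ?b y" using C(6) by (simp add: A'_def restr_path_def)
  next
    fix g assume g: "g \<in> gap_intervals A'"
    obtain p' q' where g': "g = (p', q')" by (cases g)
    have L: "p' < q' \<and> p' \<in> A' \<and> q' \<in> A' \<and> {p'<..<q'} \<inter> A' = {}"
      by (rule gap_L1[OF A'_closed A'_sub A'0]) (use g g' in simp)
    let ?p = "?f p'" and ?q = "?f q'"
    have pq: "?p < ?q" using L fmono by blast
    have pC: "?p \<in> C" "?q \<in> C" using L by (simp_all add: A'_def)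
    have empt: "{?p<..<?q} \<inter> C = {}"
    proof (rule ccontr)
      assume "{?p<..<?q} \<inter> C \<noteq> {}"
      then obtain x where x: "?p < x" "x < ?q" "x \<in> C" by auto
      let ?y = "(x - a) / (b - a)"
      have "?f ?y = x" by (rule finv)
      then have "?y \<in> A'" "p' < ?y" "?y < q'" using x fmono[of p' ?y] fmono[of ?y q'] by (simp_all add: A'_def)
      then show False using L by auto
    qed
    have H: "homotopic_paths S (restr_path ?p ?q \<alpha>) (restr_path ?p ?q \<beta>)"
      by (rule gapC[OF pq pC empt])
    have e1: "restr_path p' q' ?a = restr_path ?p ?q \<alpha>"
      by (rule ext) (simp add: restr_path_def algebra_simps)
    have e2: "restr_path p' q' ?b = restr_path ?p ?q \<beta>"
      by (rule ext) (simp add: restr_path_def algebra_simps)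
    show "case g of (a, b) \<Rightarrow> homotopic_paths S (restr_path a b ?a) (restr_path a b ?b)"
      using H by (simp add: g' e1 e2)
  qed
  have "scattered_set A'" by (rule scattered_countable_closed[OF A'_closed A'_count])
  then show ?thesis using wd P1 P2 cut unfolding well_defined_scattered_products_def by blast
qed



lemma mono_family:
  fixes A :: "'i::wellorder \<Rightarrow> 'x set"
  assumes succ_sub: "\<forall>i j. i < j \<and> \<not> (\<exists>k. i < k \<and> k < j) \<longrightarrow> A j \<subseteq> A i"
    and lim_int: "\<forall>l. (\<exists>m. m < l) \<and> (\<forall>m<l. \<exists>k. m < k \<and> k < l) \<longrightarrow> A l = (\<Inter>m\<in>{m. m < l}. A m)"
  shows "i \<le> j \<Longrightarrow> A j \<subseteq> A i"
proof (induction j rule: less_induct)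
  case (less j)
  show ?case
  proof (cases "i = j")
    case True then show ?thesis by simp
  next
    case False
    with less.prems have ij: "i < j" by simp
    show ?thesis
    proof (cases "\<exists>k<j. \<not> (\<exists>m. k < m \<and> m < j)")
      case True
      then obtain k where k: "k < j" "\<not> (\<exists>m. k < m \<and> m < j)" by blast
      have "i \<le> k" using k ij not_less by blast
      then have "A k \<subseteq> A i" using less.IH k(1) by blast
      moreover have "A j \<subseteq> A k" using succ_sub k by blast
      ultimately show ?thesis by blast
    next
      case False
      then have "A j = (\<Inter>m\<in>{m. m < j}. A m)" using lim_int ij by blast
      then show ?thesis using ij by blast
    qed
  qed
qed




lemma gap_main:
  fixes S :: "'a::topological_space set"
    and \<alpha> \<beta> :: "real \<Rightarrow> 'a"
    and A :: "'i::wellorder \<Rightarrow> real set"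
  assumes wd: "well_defined_scattered_products S"
    and paths: "path \<alpha>" "path_image \<alpha> \<subseteq> S" "path \<beta>" "path_image \<beta> \<subseteq> S"
    and countable_index: "countable (UNIV :: 'i set)"
    and cut: "\<forall>i. homotopy_cut_set S \<alpha> \<beta> (A i)"
    and succ_sub: "\<forall>i j. i < j \<and> \<not> (\<exists>k. i < k \<and> k < j) \<longrightarrow> A j \<subseteq> A i"
    and lim_int: "\<forall>l. (\<exists>m. m < l) \<and> (\<forall>m<l. \<exists>k. m < k \<and> k < l) \<longrightarrow> A l = (\<Inter>m\<in>{m. m < l}. A m)"
    and gaps: "\<forall>i j a b c d. i < j \<and> \<not> (\<exists>k. i < k \<and> k < j) \<and>
                  (c, d) \<in> gap_intervals (A j) \<and> (a, b) \<in> gap_intervals (A i) \<and>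
                  {a<..<b} \<subseteq> {c<..<d} \<longrightarrow>
                  (c < a \<longrightarrow> homotopic_paths S (restr_path c a \<alpha>) (restr_path c a \<beta>)) \<and>
                  (b < d \<longrightarrow> homotopic_paths S (restr_path b d \<alpha>) (restr_path b d \<beta>))"
    and ab: "a < b" "\<And>i. a \<in> A i" "\<And>i. b \<in> A i" "\<And>x. a < x \<Longrightarrow> x < b \<Longrightarrow> \<exists>i. x \<notin> A i"
  shows "homotopic_paths S (restr_path a b \<alpha>) (restr_path a b \<beta>)"
proof -
  have mono: "\<And>i j. i \<le> j \<Longrightarrow> A j \<subseteq> A i"
    using mono_family[OF succ_sub lim_int] by blast
  have cutd: "closed (A i) \<and> A i \<subseteq> {0..1} \<and> interior (closure (A i)) = {} \<and> 0 \<in> A i \<and> 1 \<in> A i \<and>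
     (\<forall>x\<in>A i. \<alpha> x = \<beta> x) \<and>
     (\<forall>(a,b)\<in>gap_intervals (A i). homotopic_paths S (restr_path a b \<alpha>) (restr_path a b \<beta>))" for i
    using cut unfolding homotopy_cut_set_def by blast
  have clA: "\<And>i. closed (A i)" and subA: "\<And>i. A i \<subseteq> {0..1}"
    and A0: "\<And>i. 0 \<in> A i" and A1: "\<And>i. 1 \<in> A i"
    and eqA: "\<And>i x. x \<in> A i \<Longrightarrow> \<alpha> x = \<beta> x"
    using cutd by blast+
  have intA: "\<And>i. interior (A i) = {}" using cutd clA by (simp add: closure_closed)
  have gapA: "\<And>i p q. (p, q) \<in> gap_intervals (A i) \<Longrightarrow>
                 homotopic_paths S (restr_path p q \<alpha>) (restr_path p q \<beta>)"
  proof -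
    fix i p q assume "(p, q) \<in> gap_intervals (A i)"
    moreover have "\<forall>(a,b)\<in>gap_intervals (A i). homotopic_paths S (restr_path a b \<alpha>) (restr_path a b \<beta>)"
      using cutd by blast
    ultimately show "homotopic_paths S (restr_path p q \<alpha>) (restr_path p q \<beta>)" by blast
  qed
  define i0 where "i0 = (LEAST i::'i. True)"
  have i0: "\<And>i. i0 \<le> i" by (simp add: i0_def Least_le)
  have a01: "0 \<le> a" "b \<le> 1" using subA[of i0] ab(2)[of i0] ab(3)[of i0] by auto
  have nsub: "\<not> {a<..<b} \<subseteq> A i0"
  proof
    assume "{a<..<b} \<subseteq> A i0"
    then have "{a<..<b} \<subseteq> interior (A i0)" by (simp add: interior_maximal)
    then have "{a<..<b} = {}" using intA[of i0] by simp
    then show False using ab(1) by simp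
  qed
  from nsub obtain t0 where t0: "t0 \<in> {a<..<b}" "t0 \<notin> A i0" by blast
  then obtain t where t: "a < t" "t < b" "t \<notin> A i0" by auto
  have tA: "\<And>i. t \<notin> A i" using t(3) mono i0 by blast
  define l where "l i = Sup (A i \<inter> {..t})" for i
  define r where "r i = Inf (A i \<inter> {t..})" for i
  have bddl: "bdd_above (A i \<inter> {..t})" for i by (auto intro: bdd_aboveI[where M=t])
  have bddr: "bdd_below (A i \<inter> {t..})" for i by (auto intro: bdd_belowI[where m=t])
  have neL: "A i \<inter> {..t} \<noteq> {}" for i using ab(2)[of i] t by auto
  have neR: "A i \<inter> {t..} \<noteq> {}" for i using ab(3)[of i] t by auto
  have lA': "l i \<in> A i \<inter> {..t}" for i
    unfolding l_def by (rule closed_contains_Sup[OF neL bddl]) (simp add: clA closed_Int)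
  have rA': "r i \<in> A i \<inter> {t..}" for i
    unfolding r_def by (rule closed_contains_Inf[OF neR bddr]) (simp add: clA closed_Int)
  have lA: "l i \<in> A i" and rA: "r i \<in> A i" for i using lA' rA' by auto
  have l_ge: "x \<le> l i" if "x \<in> A i" "x \<le> t" for i x
    unfolding l_def by (rule cSup_upper) (use that bddl in auto)
  have r_le: "r i \<le> x" if "x \<in> A i" "t \<le> x" for i x
    unfolding r_def by (rule cInf_lower) (use that bddr in auto)
  have lt: "l i < t" for i using lA'[of i] tA[of i] lA[of i] by (cases "l i = t") auto
  have tr: "t < r i" for i using rA'[of i] tA[of i] rA[of i] by (cases "r i = t") auto
  have la: "a \<le> l i" for i using l_ge[OF ab(2)] t by simp
  have rb: "r i \<le> b" for i using r_le[OF ab(3)] t by simp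
  have emptA: "{l i<..<r i} \<inter> A i = {}" for i
  proof (rule ccontr)
    assume "{l i<..<r i} \<inter> A i \<noteq> {}"
    then obtain x where x: "l i < x" "x < r i" "x \<in> A i" by auto
    show False
    proof (cases "x \<le> t")
      case True then show False using l_ge[OF x(3)] x(1) by simp
    next
      case False then show False using r_le[OF x(3)] x(2) by simp
    qed
  qed
  have gapi: "(l i, r i) \<in> gap_intervals (A i)" for i
    by (rule gap_L2[OF subA A0 A1]) (use lt tr lA rA emptA in \<open>auto intro: less_trans\<close>)
  have lmono: "l j \<le> l i" if "i \<le> j" for i j
    using l_ge[of "l j" i] lA[of j] mono[OF that] lt[of j] by auto
  have rmono: "r i \<le> r j" if "i \<le> j" for i j
    using r_le[of "r j" i] rA[of j] mono[OF that] tr[of j] by auto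
  have succ_hom: "(l k < l m \<longrightarrow> homotopic_paths S (restr_path (l k) (l m) \<alpha>) (restr_path (l k) (l m) \<beta>)) \<and>
                  (r m < r k \<longrightarrow> homotopic_paths S (restr_path (r m) (r k) \<alpha>) (restr_path (r m) (r k) \<beta>))"
    if "m < k" "\<not> (\<exists>n. m < n \<and> n < k)" for m k
  proof -
    have "l k \<le> l m" "r m \<le> r k" using that(1) lmono[of m k] rmono[of m k] by simp_all
    then have "{l m<..<r m} \<subseteq> {l k<..<r k}" by auto
    then show ?thesis using gaps that gapi[of k] gapi[of m] by blast
  qed
  have bddLl: "bdd_below (range l)" using la by (auto intro: bdd_belowI[where m=a])
  have bddRr: "bdd_above (range r)" using rb by (auto intro: bdd_aboveI[where M=b])
  have K1: "\<exists>i. l i < a + e" if e: "e > 0" for e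
  proof -
    let ?a = "Inf (range l)"
    have "?a \<le> a"
    proof (rule ccontr)
      assume "\<not> ?a \<le> a"
      then have gt: "a < ?a" by simp
      have "?a \<le> l i0" by (rule cInf_lower) (auto simp: bddLl)
      then have "?a < b" using lt[of i0] t by linarith
      then obtain \<mu> where mu: "?a \<notin> A \<mu>" using ab(4) gt by blast
      obtain \<epsilon> where eps: "\<epsilon> > 0" "ball ?a \<epsilon> \<subseteq> - A \<mu>"
        using clA[of \<mu>] mu by (metis ComplI open_Compl open_contains_ball)
      have "?a < ?a + \<epsilon>" using eps by simp
      then obtain i where i: "l i < ?a + \<epsilon>"
        using cInf_less_iff[of "range l" "?a + \<epsilon>"] bddLl by auto
      define \<nu> where "\<nu> = max i \<mu>"
      have "l \<nu> \<le> l i" by (rule lmono) (simp add: \<nu>_def)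
      moreover have "?a \<le> l \<nu>" by (rule cInf_lower) (auto simp: bddLl)
      moreover have "l \<nu> \<in> A \<mu>" using lA[of \<nu>] mono[of \<mu> \<nu>] by (auto simp: \<nu>_def)
      ultimately have "l \<nu> \<in> ball ?a \<epsilon>" "l \<nu> \<in> A \<mu>" using i by (auto simp: dist_real_def)
      then show False using eps by auto
    qed
    then have "?a < a + e" using e by simp
    then show ?thesis using cInf_less_iff[of "range l" "a + e"] bddLl by auto
  qed
  have K1r: "\<exists>i. b - e < r i" if e: "e > 0" for e
  proof -
    let ?b = "Sup (range r)"
    have "b \<le> ?b"
    proof (rule ccontr)
      assume "\<not> b \<le> ?b"
      then have gt: "?b < b" by simp
      have "r i0 \<le> ?b" by (rule cSup_upper) (auto simp: bddRr)
      then have "a < ?b" using tr[of i0] t by linarith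
      then obtain \<mu> where mu: "?b \<notin> A \<mu>" using ab(4) gt by blast
      obtain \<epsilon> where eps: "\<epsilon> > 0" "ball ?b \<epsilon> \<subseteq> - A \<mu>"
        using clA[of \<mu>] mu by (metis ComplI open_Compl open_contains_ball)
      have "?b - \<epsilon> < ?b" using eps by simp
      then obtain i where i: "?b - \<epsilon> < r i"
        using less_cSup_iff[of "range r" "?b - \<epsilon>"] bddRr by auto
      define \<nu> where "\<nu> = max i \<mu>"
      have "r i \<le> r \<nu>" by (rule rmono) (simp add: \<nu>_def)
      moreover have "r \<nu> \<le> ?b" by (rule cSup_upper) (auto simp: bddRr)
      moreover have "r \<nu> \<in> A \<mu>" using rA[of \<nu>] mono[of \<mu> \<nu>] by (auto simp: \<nu>_def)
      ultimately have "r \<nu> \<in> ball ?b \<epsilon>" "r \<nu> \<in> A \<mu>" using i by (auto simp: dist_real_def)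
      then show False using eps by auto
    qed
    then have "b - e < ?b" using e by simp
    then show ?thesis using less_cSup_iff[of "range r" "b - e"] bddRr by auto
  qed
  have K2: "x \<le> l j" if j: "\<exists>m. m < j" "\<forall>m<j. \<exists>k. m < k \<and> k < j" and x: "\<forall>m<j. x \<le> l m" for j x
  proof -
    let ?Y = "l ` {m. m < j}"
    let ?y = "Inf ?Y"
    have neY: "?Y \<noteq> {}" using j(1) by auto
    have bddY: "bdd_below ?Y" using la by (auto intro: bdd_belowI[where m=a])
    have xy: "x \<le> ?y" using x neY by (auto intro!: cInf_greatest)
    have yA: "?y \<in> A m" if m: "m < j" for m
    proof -
      have "?y \<in> closure (A m)" unfolding closure_approachable
      proof (intro allI impI)
        fix e :: real assume e: "e > 0"
        then have "?y < ?y + e" by simp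
        then obtain m' where m': "m' < j" "l m' < ?y + e"
          using cInf_less_iff[OF neY bddY, of "?y + e"] by auto
        define n where "n = max m m'"
        have nj: "n < j" using m m' by (simp add: n_def)
        have "l n \<le> l m'" by (rule lmono) (simp add: n_def)
        moreover have "?y \<le> l n" by (rule cInf_lower) (use nj bddY in auto)
        ultimately have "dist (l n) ?y < e" using m' by (auto simp: dist_real_def)
        moreover have "l n \<in> A m" using lA[of n] mono[of m n] by (auto simp: n_def)
        ultimately show "\<exists>z\<in>A m. dist z ?y < e" by blast
      qed
      then show ?thesis using clA[of m] by (simp add: closure_closed)
    qed
    have "A j = (\<Inter>m\<in>{m. m < j}. A m)" using lim_int j by blast
    then have yAj: "?y \<in> A j" using yA by simp
    obtain m0 where m0: "m0 < j" using j(1) by blast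
    have "?y \<le> l m0" by (rule cInf_lower) (use m0 bddY in auto)
    then have "?y \<le> t" using lt[of m0] by simp
    then have "?y \<le> l j" by (rule l_ge[OF yAj])
    then show ?thesis using xy by simp
  qed
  have K2r: "r j \<le> x" if j: "\<exists>m. m < j" "\<forall>m<j. \<exists>k. m < k \<and> k < j" and x: "\<forall>m<j. r m \<le> x" for j x
  proof -
    let ?Y = "r ` {m. m < j}"
    let ?y = "Sup ?Y"
    have neY: "?Y \<noteq> {}" using j(1) by auto
    have bddY: "bdd_above ?Y" using rb by (auto intro: bdd_aboveI[where M=b])
    have xy: "?y \<le> x" using x neY by (auto intro!: cSup_least)
    have yA: "?y \<in> A m" if m: "m < j" for m
    proof -
      have "?y \<in> closure (A m)" unfolding closure_approachable
      proof (intro allI impI)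
        fix e :: real assume e: "e > 0"
        then have "?y - e < ?y" by simp
        then obtain m' where m': "m' < j" "?y - e < r m'"
          using less_cSup_iff[OF neY bddY, of "?y - e"] by auto
        define n where "n = max m m'"
        have nj: "n < j" using m m' by (simp add: n_def)
        have "r m' \<le> r n" by (rule rmono) (simp add: n_def)
        moreover have "r n \<le> ?y" by (rule cSup_upper) (use nj bddY in auto)
        ultimately have "dist (r n) ?y < e" using m' by (auto simp: dist_real_def)
        moreover have "r n \<in> A m" using rA[of n] mono[of m n] by (auto simp: n_def)
        ultimately show "\<exists>z\<in>A m. dist z ?y < e" by blast
      qed
      then show ?thesis using clA[of m] by (simp add: closure_closed)
    qed
    have "A j = (\<Inter>m\<in>{m. m < j}. A m)" using lim_int j by blast
    then have yAj: "?y \<in> A j" using yA by simp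
    obtain m0 where m0: "m0 < j" using j(1) by blast
    have "r m0 \<le> ?y" by (rule cSup_upper) (use m0 bddY in auto)
    then have "t \<le> ?y" using tr[of m0] by simp
    then have "r j \<le> ?y" by (rule r_le[OF yAj])
    then show ?thesis using xy by simp
  qed
  define L where "L = insert a (range l)"
  define R where "R = insert b (range r)"
  have closedL: "closed L"
  proof -
    have "closure L \<subseteq> L"
    proof
      fix x assume xc: "x \<in> closure L"
      show "x \<in> L"
      proof (rule ccontr)
        assume xn: "x \<notin> L"
        have "L \<subseteq> {a..}" using la by (auto simp: L_def)
        then have "closure L \<subseteq> {a..}" by (rule closure_minimal) simp
        then have "a \<le> x" using xc by auto
        moreover have "x \<noteq> a" using xn by (auto simp: L_def)
        ultimately have ax: "a < x" by simp
        obtain i1 where i1: "l i1 < x" using K1[of "x - a"] ax by auto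
        define j where "j = (LEAST i. l i < x)"
        have lj: "l j < x" unfolding j_def by (rule LeastI[of _ i1]) (rule i1)
        have below: "x < l m" if "m < j" for m
        proof -
          have "\<not> l m < x" using not_less_Least[OF that[unfolded j_def]] .
          moreover have "l m \<noteq> x" using xn by (auto simp: L_def)
          ultimately show ?thesis by simp
        qed
        have "\<exists>U. open U \<and> x \<in> U \<and> U \<inter> L = {}"
        proof (cases "\<exists>m. m < j")
          case False
          have hl: "\<not> (l j < l i)" for i using False lmono[of j i] by (meson not_le)
          have "{l j<..} \<inter> L = {}" unfolding L_def using hl la[of j] by auto
          then show ?thesis using lj by (intro exI[of _ "{l j<..}"]) auto
        next
          case True
          show ?thesis
          proof (cases "\<exists>k<j. \<not> (\<exists>m. k < m \<and> m < j)")
            case True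
            then obtain k where k: "k < j" "\<not> (\<exists>m. k < m \<and> m < j)" by blast
            have xk: "x < l k" using below k(1) by simp
            have hl: "\<not> (l j < l i \<and> l i < l k)" for i
            proof (cases "i \<le> k")
              case True then show ?thesis using lmono[OF True] by auto
            next
              case False
              then have "j \<le> i" using k by (meson not_le)
              then have "l i \<le> l j" by (rule lmono)
              then show ?thesis by simp
            qed
            have "{l j<..<l k} \<inter> L = {}" unfolding L_def using hl la[of j] by auto
            then show ?thesis using lj xk by (intro exI[of _ "{l j<..<l k}"]) auto
          next
            case False
            then have "x \<le> l j" using K2[of j x] True below by (auto intro: less_imp_le)
            then show ?thesis using lj by simp
          qed
        qed
        then obtain U where U: "open U" "x \<in> U" "U \<inter> L = {}" by blast
        then have "U \<inter> closure L = {}" using open_Int_closure_eq_empty by blast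
        then show False using U(2) xc by blast
      qed
    qed
    then show ?thesis using closure_subset_eq by blast
  qed
  have closedR: "closed R"
  proof -
    have "closure R \<subseteq> R"
    proof
      fix x assume xc: "x \<in> closure R"
      show "x \<in> R"
      proof (rule ccontr)
        assume xn: "x \<notin> R"
        have "R \<subseteq> {..b}" using rb by (auto simp: R_def)
        then have "closure R \<subseteq> {..b}" by (rule closure_minimal) simp
        then have "x \<le> b" using xc by auto
        moreover have "x \<noteq> b" using xn by (auto simp: R_def)
        ultimately have ax: "x < b" by simp
        obtain i1 where i1: "x < r i1" using K1r[of "b - x"] ax by auto
        define j where "j = (LEAST i. x < r i)"
        have lj: "x < r j" unfolding j_def by (rule LeastI[of _ i1]) (rule i1)
        have below: "r m < x" if "m < j" for m
        proof -
          have "\<not> x < r m" using not_less_Least[OF that[unfolded j_def]] .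
          moreover have "r m \<noteq> x" using xn by (auto simp: R_def)
          ultimately show ?thesis by simp
        qed
        have "\<exists>U. open U \<and> x \<in> U \<and> U \<inter> R = {}"
        proof (cases "\<exists>m. m < j")
          case False
          have hl: "\<not> (r i < r j)" for i using False rmono[of j i] by (meson not_le)
          have "{..<r j} \<inter> R = {}" unfolding R_def using hl rb[of j] by auto
          then show ?thesis using lj by (intro exI[of _ "{..<r j}"]) auto
        next
          case True
          show ?thesis
          proof (cases "\<exists>k<j. \<not> (\<exists>m. k < m \<and> m < j)")
            case True
            then obtain k where k: "k < j" "\<not> (\<exists>m. k < m \<and> m < j)" by blast
            have xk: "r k < x" using below k(1) by simp
            have hl: "\<not> (r k < r i \<and> r i < r j)" for i
            proof (cases "i \<le> k")
              case True then show ?thesis using rmono[OF True] by auto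
            next
              case False
              then have "j \<le> i" using k by (meson not_le)
              then have "r j \<le> r i" by (rule rmono)
              then show ?thesis by simp
            qed
            have "{r k<..<r j} \<inter> R = {}" unfolding R_def using hl rb[of j] by auto
            then show ?thesis using lj xk by (intro exI[of _ "{r k<..<r j}"]) auto
          next
            case False
            then have "r j \<le> x" using K2r[of j x] True below by (auto intro: less_imp_le)
            then show ?thesis using lj by simp
          qed
        qed
        then obtain U where U: "open U" "x \<in> U" "U \<inter> R = {}" by blast
        then have "U \<inter> closure R = {}" using open_Int_closure_eq_empty by blast
        then show False using U(2) xc by blast
      qed
    qed
    then show ?thesis using closure_subset_eq by blast
  qed
  define C where "C = L \<union> R"
  have closedC: "closed C" unfolding C_def using closedL closedR by (rule closed_Un)
  have countC: "countable C" unfolding C_def L_def R_def using countable_index by simp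
  have lb: "l i < b" and ar: "a < r i" for i using lt[of i] tr[of i] t by linarith+
  have subC: "C \<subseteq> {a..b}" using la rb lb ar ab(1) by (auto simp: C_def L_def R_def less_imp_le)
  have aC: "a \<in> C" and bC: "b \<in> C" by (auto simp: C_def L_def R_def)
  have eqC: "\<forall>x\<in>C. \<alpha> x = \<beta> x"
    using eqA lA rA ab(2) ab(3) by (auto simp: C_def L_def R_def)
  have C_cases: "z = a \<or> z = b \<or> (\<exists>i. z = l i) \<or> (\<exists>i. z = r i)" if "z \<in> C" for z
    using that by (auto simp: C_def L_def R_def)
  have lC: "l i \<in> C" and rC: "r i \<in> C" for i by (auto simp: C_def L_def R_def)
  have li0: "l i \<le> l i0" for i by (rule lmono[OF i0])
  have ri0: "r i0 \<le> r i" for i by (rule rmono[OF i0])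
  have lr0: "l i0 < r i0" by (rule less_trans[OF lt tr])
  have gapC: "homotopic_paths S (restr_path p q \<alpha>) (restr_path p q \<beta>)"
    if pq: "p < q" "p \<in> C" "q \<in> C" "{p<..<q} \<inter> C = {}" for p q
  proof -
    have notin: "False" if "z \<in> C" "p < z" "z < q" for z
    proof -
      have "z \<in> {p<..<q} \<inter> C" using that by simp
      then show False using pq(4) by simp
    qed
    have pa: "a \<le> p" and qb: "q \<le> b" using subC pq by auto
    consider (A) "q \<le> l i0" | (B) "r i0 \<le> p" | (M) "l i0 < q" "p < r i0" by linarith
    then show ?thesis
    proof cases
      case A
      have "\<exists>iq. q = l iq"
      proof -
        have "q \<noteq> a" using pq(1) pa by simp
        moreover have "q \<noteq> b" using A lb[of i0] by simp
        moreover have "q \<noteq> r i" for i using A ri0[of i] lr0 by simp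
        ultimately show ?thesis using C_cases[OF pq(3)] by blast
      qed
      then obtain iq where iq: "q = l iq" by blast
      have aq: "a < q" using pq(1) pa by simp
      obtain i1 where i1: "l i1 < q" using K1[of "q - a"] aq by auto
      define k where "k = (LEAST i. l i < q)"
      have lk: "l k < q" unfolding k_def by (rule LeastI[of _ i1]) (rule i1)
      have belowk: "q \<le> l m" if "m < k" for m
        using not_less_Least[OF that[unfolded k_def]] by simp
      have iqk: "iq < k"
      proof (rule ccontr)
        assume "\<not> iq < k"
        then have "l iq \<le> l k" using lmono by (simp add: not_less)
        then show False using iq lk by simp
      qed
      have "\<exists>m<k. \<not> (\<exists>n. m < n \<and> n < k)"
      proof (rule ccontr)
        assume "\<not> (\<exists>m<k. \<not> (\<exists>n. m < n \<and> n < k))"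
        then have "q \<le> l k" using K2[of k q] iqk belowk by blast
        then show False using lk by simp
      qed
      then obtain m where m: "m < k" "\<not> (\<exists>n. m < n \<and> n < k)" by blast
      have "iq \<le> m" using m iqk by (meson not_le)
      then have "l m \<le> q" using lmono iq by simp
      then have lmq: "l m = q" using belowk[OF m(1)] by simp
      have "\<not> p < l k" using notin[OF lC[of k]] lk by blast
      moreover have "p \<le> l k"
      proof -
        have "p = a \<or> p = b \<or> (\<exists>i. p = l i) \<or> (\<exists>i. p = r i)" by (rule C_cases[OF pq(2)])
        moreover have "p \<noteq> b" using pq(1) qb by simp
        moreover have "p \<noteq> r i" for i using pq(1) A ri0[of i] lr0 by simp
        moreover have "l n \<le> l k" if "p = l n" for n
        proof (cases "n < k")
          case True then show ?thesis using belowk[OF True] that pq(1) by simp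
        next
          case False then show ?thesis using lmono by (simp add: not_less)
        qed
        ultimately show ?thesis using la[of k] by blast
      qed
      ultimately have "p = l k" by simp
      moreover have "l k < l m" using lk lmq by simp
      ultimately show ?thesis using succ_hom[OF m] lmq by simp
    next
      case B
      have "\<exists>ip. p = r ip"
      proof -
        have "p \<noteq> b" using pq(1) qb by simp
        moreover have "p \<noteq> a" using B ar[of i0] by simp
        moreover have "p \<noteq> l i" for i using B li0[of i] lr0 by simp
        ultimately show ?thesis using C_cases[OF pq(2)] by blast
      qed
      then obtain ip where ip: "p = r ip" by blast
      have pb: "p < b" using pq(1) qb by simp
      obtain i1 where i1: "p < r i1" using K1r[of "b - p"] pb by auto
      define k where "k = (LEAST i. p < r i)"
      have rk: "p < r k" unfolding k_def by (rule LeastI[of _ i1]) (rule i1)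
      have belowk: "r m \<le> p" if "m < k" for m
        using not_less_Least[OF that[unfolded k_def]] by simp
      have ipk: "ip < k"
      proof (rule ccontr)
        assume "\<not> ip < k"
        then have "r k \<le> r ip" using rmono by (simp add: not_less)
        then show False using ip rk by simp
      qed
      have "\<exists>m<k. \<not> (\<exists>n. m < n \<and> n < k)"
      proof (rule ccontr)
        assume "\<not> (\<exists>m<k. \<not> (\<exists>n. m < n \<and> n < k))"
        then have "r k \<le> p" using K2r[of k p] ipk belowk by blast
        then show False using rk by simp
      qed
      then obtain m where m: "m < k" "\<not> (\<exists>n. m < n \<and> n < k)" by blast
      have "ip \<le> m" using m ipk by (meson not_le)
      then have "p \<le> r m" using rmono ip by simp
      then have rmp: "r m = p" using belowk[OF m(1)] by simp
      have "\<not> r k < q" using notin[OF rC[of k]] rk by blast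
      moreover have "r k \<le> q"
      proof -
        have "q = a \<or> q = b \<or> (\<exists>i. q = l i) \<or> (\<exists>i. q = r i)" by (rule C_cases[OF pq(3)])
        moreover have "q \<noteq> a" using pq(1) pa by simp
        moreover have "q \<noteq> l i" for i using pq(1) B li0[of i] lr0 by simp
        moreover have "r k \<le> r n" if "q = r n" for n
        proof (cases "n < k")
          case True then show ?thesis using belowk[OF True] that pq(1) by simp
        next
          case False then show ?thesis using rmono by (simp add: not_less)
        qed
        ultimately show ?thesis using rb[of k] by blast
      qed
      ultimately have "q = r k" by simp
      moreover have "r m < r k" using rk rmp by simp
      ultimately show ?thesis using succ_hom[OF m] rmp by simp
    next
      case M
      have "\<not> p < l i0" using notin[OF lC[of i0]] M by blast
      then have p1: "l i0 \<le> p" by simp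
      have "\<not> r i0 < q" using notin[OF rC[of i0]] M by blast
      then have q1: "q \<le> r i0" by simp
      have "p = l i0"
      proof -
        have "p = a \<or> p = b \<or> (\<exists>i. p = l i) \<or> (\<exists>i. p = r i)" by (rule C_cases[OF pq(2)])
        moreover have "p \<noteq> b" using pq(1) qb by simp
        moreover have "p \<noteq> r i" for i using M ri0[of i] by simp
        moreover have "p \<le> l i0" if "p = l n" for n using that li0 by simp
        moreover have "p \<le> l i0" if "p = a" using that la by simp
        ultimately have "p \<le> l i0" by blast
        then show ?thesis using p1 by simp
      qed
      moreover have "q = r i0"
      proof -
        have "q = a \<or> q = b \<or> (\<exists>i. q = l i) \<or> (\<exists>i. q = r i)" by (rule C_cases[OF pq(3)])
        moreover have "q \<noteq> a" using pq(1) pa by simp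
        moreover have "q \<noteq> l i" for i using M li0[of i] by simp
        moreover have "r i0 \<le> q" if "q = r n" for n using that ri0 by simp
        moreover have "r i0 \<le> q" if "q = b" using that rb by simp
        ultimately have "r i0 \<le> q" by blast
        then show ?thesis using q1 by simp
      qed
      ultimately show ?thesis using gapA[OF gapi[of i0]] by simp
    qed
  qed
  show ?thesis
    by (rule transport[OF wd paths a01(1) ab(1) a01(2) closedC countC subC aC bC eqC gapC])
qed


theorem mainTheorem17:
  fixes S :: "'a::topological_space set"
    and \<alpha> \<beta> :: "real \<Rightarrow> 'a"
    and A :: "'i::wellorder \<Rightarrow> real set"
  assumes wd: "well_defined_scattered_products S"
    and paths: "path \<alpha>" "path_image \<alpha> \<subseteq> S" "path \<beta>" "path_image \<beta> \<subseteq> S"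
    and countable_index: "countable (UNIV :: 'i set)"
    and limit_index: "\<forall>i::'i. \<exists>j. i < j"
    and cut: "\<forall>i. homotopy_cut_set S \<alpha> \<beta> (A i)"
    and succ_sub: "\<forall>i j. i < j \<and> \<not> (\<exists>k. i < k \<and> k < j) \<longrightarrow> A j \<subseteq> A i"
    and lim_int: "\<forall>l. (\<exists>m. m < l) \<and> (\<forall>m<l. \<exists>k. m < k \<and> k < l) \<longrightarrow> A l = (\<Inter>m\<in>{m. m < l}. A m)"
    and gaps: "\<forall>i j a b c d. i < j \<and> \<not> (\<exists>k. i < k \<and> k < j) \<and>
                  (c, d) \<in> gap_intervals (A j) \<and> (a, b) \<in> gap_intervals (A i) \<and>
                  {a<..<b} \<subseteq> {c<..<d} \<longrightarrow>
                  (c < a \<longrightarrow> homotopic_paths S (restr_path c a \<alpha>) (restr_path c a \<beta>)) \<and>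
                  (b < d \<longrightarrow> homotopic_paths S (restr_path b d \<alpha>) (restr_path b d \<beta>))"
  shows "homotopy_cut_set S \<alpha> \<beta> (\<Inter>i. A i)"
proof -
  have cutd: "closed (A i) \<and> A i \<subseteq> {0..1} \<and> interior (closure (A i)) = {} \<and> 0 \<in> A i \<and> 1 \<in> A i \<and>
     (\<forall>x\<in>A i. \<alpha> x = \<beta> x)" for i
    using cut unfolding homotopy_cut_set_def by blast
  have clA: "\<And>i. closed (A i)" and subA: "\<And>i. A i \<subseteq> {0..1}"
    and A0: "\<And>i. 0 \<in> A i" and A1: "\<And>i. 1 \<in> A i"
    and eqA: "\<And>i x. x \<in> A i \<Longrightarrow> \<alpha> x = \<beta> x"
    using cutd by blast+
  have intA: "\<And>i. interior (A i) = {}" using cutd clA by (simp add: closure_closed)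
  define K where "K = (\<Inter>i. A i)"
  obtain i0 :: 'i where True by blast
  have clK: "closed K" unfolding K_def by (rule closed_INT) (simp add: clA)
  have subK: "K \<subseteq> {0..1}" using subA[of i0] by (auto simp: K_def)
  have K0: "0 \<in> K" "1 \<in> K" using A0 A1 by (auto simp: K_def)
  have intK: "interior (closure K) = {}"
  proof -
    have "interior K \<subseteq> interior (A i0)" by (rule interior_mono) (auto simp: K_def)
    then show ?thesis using intA[of i0] clK by (simp add: closure_closed)
  qed
  have eqK: "\<forall>x\<in>K. \<alpha> x = \<beta> x" using eqA by (auto simp: K_def)
  have gK: "\<forall>(a,b)\<in>gap_intervals K. homotopic_paths S (restr_path a b \<alpha>) (restr_path a b \<beta>)"
  proof
    fix g assume g: "g \<in> gap_intervals K"
    obtain a b where g': "g = (a, b)" by (cases g)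
    have L: "a < b \<and> a \<in> K \<and> b \<in> K \<and> {a<..<b} \<inter> K = {}"
      by (rule gap_L1[OF clK subK K0]) (use g g' in simp)
    have aA: "\<And>i. a \<in> A i" and bA: "\<And>i. b \<in> A i" using L by (auto simp: K_def)
    have nA: "\<exists>i. x \<notin> A i" if "a < x" "x < b" for x
    proof -
      have "x \<in> {a<..<b}" using that by simp
      then have "x \<notin> K" using L by blast
      then show ?thesis by (auto simp: K_def)
    qed
    have "homotopic_paths S (restr_path a b \<alpha>) (restr_path a b \<beta>)"
      by (rule gap_main[OF wd paths countable_index cut succ_sub lim_int gaps]) (use L aA bA nA in auto)
    then show "case g of (a, b) \<Rightarrow> homotopic_paths S (restr_path a b \<alpha>) (restr_path a b \<beta>)"
      by (simp add: g')
  qed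
  have "homotopy_cut_set S \<alpha> \<beta> K"
    unfolding homotopy_cut_set_def using clK subK intK K0 eqK gK by blast
  then show ?thesis by (simp add: K_def)
qed

end
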